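(* Let $\Gamma$ be a nontrivial standard graph, let $f$ be a Morse eigenfunction of $\Gamma$ with eigenvalue $k$ (i.e. $-f''=k^2f$ on every edge, with Neumann vertex conditions), and let $\Omega$ be a Neumann domain of $f$, regarded as a metric graph with Neumann vertex conditions at all of its vertices. Then $f|_\Omega$ is an eigenfunction of the standard graph $\Omega$ corresponding to the eigenvalue $k$.
   Context: A metric graph is a finite connected graph $\Gamma=(\mathcal{V},\mathcal{E})$ (loops allowed) in which each edge $e$ is identified with an interval $[0,L_e]$, $L_e>0$. The Laplacian acts as $f|_e\mapsto -\frac{d^2}{dx_e^2}f|_e$ on functions in $\bigoplus_e H^2([0,L_e])$ satisfying Neumann vertex conditions at every vertex $v$: $f$ is continuous at $v$ and the sum of outgoing derivatives of $f$ at $v$ over incident edges is zero. Such a graph is standard; it is assumed to have no vertices of degree two, and it is nontrivial if it is not a single loop. The eigenvalues are written as $k^2$ with $k\ge0$, and $k$ is also called the eigenvalue. An eigenfunction $f$ is Morse if on each edge no interior point has both $f'$ and $f''$ vanishing. For a Morse eigenfunction, a Neumann point is a point of $\Gamma$ which is a local extremum (maximum or minimum) of $f$ and is not a vertex of degree one. A Neumann domain of $f$ is the closure of a connected component of $\Gamma$ minus the set of Neumann points, the closure being done by adding a vertex of degree one at each open endpoint of the component; its vertices are the vertices of $\Gamma$ it contains together with these added endpoints. *)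

theory Defs
  imports "HOL-Analysis.Analysis"
begin

text \<open>A metric graph is given by a vertex set V, an edge set E, maps src/tgt
 (edge e is identified with [0, L e], 0 at src e, L e at tgt e) and lengths L.
 A function on the graph is given edgewise: f e t for t in [0, L e].\<close>

definition graph_adj :: "'e set \<Rightarrow> ('e \<Rightarrow> 'v) \<Rightarrow> ('e \<Rightarrow> 'v) \<Rightarrow> ('v \<times> 'v) set" where
  "graph_adj E src tgt = {(src e, tgt e) | e. e \<in> E} \<union> {(tgt e, src e) | e. e \<in> E}"

definition metric_graph ::
  "'v set \<Rightarrow> 'e set \<Rightarrow> ('e \<Rightarrow> 'v) \<Rightarrow> ('e \<Rightarrow> 'v) \<Rightarrow> ('e \<Rightarrow> real) \<Rightarrow> bool" where
  "metric_graph V E src tgt L \<longleftrightarrow>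
     finite V \<and> finite E \<and> E \<noteq> {} \<and>
     (\<forall>e\<in>E. src e \<in> V \<and> tgt e \<in> V \<and> L e > 0) \<and>
     (\<forall>u\<in>V. \<forall>w\<in>V. (u, w) \<in> (graph_adj E src tgt)\<^sup>*)"

text \<open>Degree: number of edge-ends at v (a loop counts twice).\<close>
definition deg :: "'e set \<Rightarrow> ('e \<Rightarrow> 'v) \<Rightarrow> ('e \<Rightarrow> 'v) \<Rightarrow> 'v \<Rightarrow> nat" where
  "deg E src tgt v = card {e\<in>E. src e = v} + card {e\<in>E. tgt e = v}"

definition standard_graph ::
  "'v set \<Rightarrow> 'e set \<Rightarrow> ('e \<Rightarrow> 'v) \<Rightarrow> ('e \<Rightarrow> 'v) \<Rightarrow> ('e \<Rightarrow> real) \<Rightarrow> bool" where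
  "standard_graph V E src tgt L \<longleftrightarrow>
     metric_graph V E src tgt L \<and> (\<forall>v\<in>V. deg E src tgt v \<noteq> 2)"

definition nontrivial_graph ::
  "'v set \<Rightarrow> 'e set \<Rightarrow> ('e \<Rightarrow> 'v) \<Rightarrow> ('e \<Rightarrow> 'v) \<Rightarrow> bool" where
  "nontrivial_graph V E src tgt \<longleftrightarrow> \<not> (\<exists>e. E = {e} \<and> src e = tgt e \<and> V = {src e})"

text \<open>Eigenfunction of the Neumann (standard) Laplacian with eigenvalue k (i.e. k^2):
 on each edge f is twice differentiable on [0, L e] with -f'' = k^2 f; f is continuous
 at the vertices; at each vertex the sum of outgoing derivatives vanishes
 (outgoing derivative is f'(0) at src e and -f'(L e) at tgt e); f is not identically zero.\<close>
definition eigenfunction ::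
  "'v set \<Rightarrow> 'e set \<Rightarrow> ('e \<Rightarrow> 'v) \<Rightarrow> ('e \<Rightarrow> 'v) \<Rightarrow> ('e \<Rightarrow> real) \<Rightarrow> real \<Rightarrow>
   ('e \<Rightarrow> real \<Rightarrow> real) \<Rightarrow> bool" where
  "eigenfunction V E src tgt L k f \<longleftrightarrow>
     k \<ge> 0 \<and>
     (\<exists>D :: 'e \<Rightarrow> real \<Rightarrow> real.
        (\<forall>e\<in>E. \<forall>t\<in>{0..L e}.
           (f e has_real_derivative D e t) (at t within {0..L e}) \<and>
           (D e has_real_derivative (- (k\<^sup>2 * f e t))) (at t within {0..L e})) \<and>
        (\<forall>v\<in>V. (\<Sum>e\<in>{e\<in>E. src e = v}. D e 0) - (\<Sum>e\<in>{e\<in>E. tgt e = v}. D e (L e)) = 0)) \<and>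
     (\<exists>g :: 'v \<Rightarrow> real. \<forall>e\<in>E. f e 0 = g (src e) \<and> f e (L e) = g (tgt e)) \<and>
     (\<exists>e\<in>E. \<exists>t\<in>{0..L e}. f e t \<noteq> 0)"

definition morse :: "'e set \<Rightarrow> ('e \<Rightarrow> real) \<Rightarrow> ('e \<Rightarrow> real \<Rightarrow> real) \<Rightarrow> bool" where
  "morse E L f \<longleftrightarrow>
     (\<forall>e\<in>E. \<forall>t\<in>{0<..<L e}. \<not> (deriv (f e) t = 0 \<and> deriv (deriv (f e)) t = 0))"

definition edge_extremum :: "('e \<Rightarrow> real) \<Rightarrow> ('e \<Rightarrow> real \<Rightarrow> real) \<Rightarrow> 'e \<Rightarrow> real \<Rightarrow> bool" where
  "edge_extremum L f e t \<longleftrightarrow> 0 < t \<and> t < L e \<and>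
     (\<exists>\<delta>>0. (\<forall>s\<in>{0..L e}. \<bar>s - t\<bar> < \<delta> \<longrightarrow> f e s \<le> f e t) \<or>
            (\<forall>s\<in>{0..L e}. \<bar>s - t\<bar> < \<delta> \<longrightarrow> f e s \<ge> f e t))"

definition vertex_extremum ::
  "'e set \<Rightarrow> ('e \<Rightarrow> 'v) \<Rightarrow> ('e \<Rightarrow> 'v) \<Rightarrow> ('e \<Rightarrow> real) \<Rightarrow> ('e \<Rightarrow> real \<Rightarrow> real) \<Rightarrow> 'v \<Rightarrow> bool" where
  "vertex_extremum E src tgt L f v \<longleftrightarrow>
     (\<exists>\<delta>>0.
       (\<forall>e\<in>E. (src e = v \<longrightarrow> (\<forall>s\<in>{0..L e}. s < \<delta> \<longrightarrow> f e s \<le> f e 0)) \<and>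
               (tgt e = v \<longrightarrow> (\<forall>s\<in>{0..L e}. L e - s < \<delta> \<longrightarrow> f e s \<le> f e (L e)))) \<or>
       (\<forall>e\<in>E. (src e = v \<longrightarrow> (\<forall>s\<in>{0..L e}. s < \<delta> \<longrightarrow> f e s \<ge> f e 0)) \<and>
               (tgt e = v \<longrightarrow> (\<forall>s\<in>{0..L e}. L e - s < \<delta> \<longrightarrow> f e s \<ge> f e (L e)))))"

text \<open>Neumann points: local extrema which are not vertices of degree one.
 A vertex v is a Neumann point iff neumann_vertex holds; the interior point t of e
 is a Neumann point iff edge_extremum holds.\<close>
definition neumann_vertex ::
  "'e set \<Rightarrow> ('e \<Rightarrow> 'v) \<Rightarrow> ('e \<Rightarrow> 'v) \<Rightarrow> ('e \<Rightarrow> real) \<Rightarrow> ('e \<Rightarrow> real \<Rightarrow> real) \<Rightarrow> 'v \<Rightarrow> bool" where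
  "neumann_vertex E src tgt L f v \<longleftrightarrow>
     vertex_extremum E src tgt L f v \<and> deg E src tgt v \<noteq> 1"

text \<open>Cutting the graph at all Neumann points.  Vertices of the cut graph: original vertices that are not
 Neumann points (Old v), and for each piece end lying at a Neumann point a new
 vertex of degree one (Cut e t side), one per side of each incident edge-end.\<close>
datatype ('v, 'e) nvert = Old 'v | Cut 'e real bool

definition cutpts :: "('e \<Rightarrow> real) \<Rightarrow> ('e \<Rightarrow> real \<Rightarrow> real) \<Rightarrow> 'e \<Rightarrow> real set" where
  "cutpts L f e = {0, L e} \<union> {t. edge_extremum L f e t}"

definition pieces :: "'e set \<Rightarrow> ('e \<Rightarrow> real) \<Rightarrow> ('e \<Rightarrow> real \<Rightarrow> real) \<Rightarrow> ('e \<times> real \<times> real) set" where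
  "pieces E L f = {(e, a, b) | e a b. e \<in> E \<and> a \<in> cutpts L f e \<and> b \<in> cutpts L f e \<and> a < b \<and>
                    (\<forall>t\<in>cutpts L f e. \<not> (a < t \<and> t < b))}"

definition nsrc ::
  "'e set \<Rightarrow> ('e \<Rightarrow> 'v) \<Rightarrow> ('e \<Rightarrow> 'v) \<Rightarrow> ('e \<Rightarrow> real) \<Rightarrow> ('e \<Rightarrow> real \<Rightarrow> real) \<Rightarrow>
   'e \<times> real \<times> real \<Rightarrow> ('v, 'e) nvert" where
  "nsrc E src tgt L f p = (case p of (e, a, b) \<Rightarrow>
     if a = 0 \<and> \<not> neumann_vertex E src tgt L f (src e) then Old (src e) else Cut e a True)"

definition ntgt ::
  "'e set \<Rightarrow> ('e \<Rightarrow> 'v) \<Rightarrow> ('e \<Rightarrow> 'v) \<Rightarrow> ('e \<Rightarrow> real) \<Rightarrow> ('e \<Rightarrow> real \<Rightarrow> real) \<Rightarrow>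
   'e \<times> real \<times> real \<Rightarrow> ('v, 'e) nvert" where
  "ntgt E src tgt L f p = (case p of (e, a, b) \<Rightarrow>
     if b = L e \<and> \<not> neumann_vertex E src tgt L f (tgt e) then Old (tgt e) else Cut e b False)"

definition nlen :: "'e \<times> real \<times> real \<Rightarrow> real" where
  "nlen p = (case p of (e, a, b) \<Rightarrow> b - a)"

definition nrestr :: "('e \<Rightarrow> real \<Rightarrow> real) \<Rightarrow> 'e \<times> real \<times> real \<Rightarrow> real \<Rightarrow> real" where
  "nrestr f p s = (case p of (e, a, b) \<Rightarrow> f e (a + s))"

text \<open>Neumann domain (OV, OE): a connected component of the cut graph, i.e. the closure
 of a connected component of Gamma minus the Neumann points, with a degree-one vertex
 added at each open end.\<close>
definition neumann_domain ::
  "'v set \<Rightarrow> 'e set \<Rightarrow> ('e \<Rightarrow> 'v) \<Rightarrow> ('e \<Rightarrow> 'v) \<Rightarrow> ('e \<Rightarrow> real) \<Rightarrow> ('e \<Rightarrow> real \<Rightarrow> real) \<Rightarrow>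
   ('v, 'e) nvert set \<Rightarrow> ('e \<times> real \<times> real) set \<Rightarrow> bool" where
  "neumann_domain V E src tgt L f OV OE \<longleftrightarrow>
     (let PE = pieces E L f;
          s = nsrc E src tgt L f; t = ntgt E src tgt L f;
          adj = graph_adj PE s t
      in (\<exists>p0\<in>PE. OV = {w. (s p0, w) \<in> adj\<^sup>*}) \<and> OE = {p\<in>PE. s p \<in> OV})"

end

theory Submission imports Defs begin
lemma deriv_left_max:
  fixes g :: "real \<Rightarrow> real"
  assumes d: "(g has_real_derivative l) (at a within {a..b})" and ab: "a < b" and "\<delta> > 0"
    and m: "\<forall>s\<in>{a..b}. s - a < \<delta> \<longrightarrow> g s \<le> g a"
  shows "l \<le> 0"
proof -
  have t: "((\<lambda>y. (g y - g a) / (y - a)) \<longlongrightarrow> l) (at a within {a..b})"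
    using d has_field_derivative_iff by blast
  have nb: "at a within {a..b} \<noteq> bot"
    using ab by (simp add: at_within_Icc_at_right)
  have "\<forall>\<^sub>F y in at a within {a..b}. (g y - g a) / (y - a) \<le> 0"
    unfolding eventually_at
  proof (intro exI[of _ \<delta>] conjI ballI impI)
    fix y assume y: "y \<in> {a..b}" "y \<noteq> a \<and> dist y a < \<delta>"
    then have "y - a > 0" "y - a < \<delta>" by (auto simp: dist_real_def)
    with m y show "(g y - g a) / (y - a) \<le> 0" by (simp add: divide_nonpos_pos)
  qed (use assms in auto)
  then show ?thesis using tendsto_upperbound[OF t _ nb] by blast
qed

lemma deriv_right_max:
  fixes g :: "real \<Rightarrow> real"
  assumes d: "(g has_real_derivative l) (at b within {a..b})" and ab: "a < b" and "\<delta> > 0"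
    and m: "\<forall>s\<in>{a..b}. b - s < \<delta> \<longrightarrow> g s \<le> g b"
  shows "l \<ge> 0"
proof -
  have t: "((\<lambda>y. (g y - g b) / (y - b)) \<longlongrightarrow> l) (at b within {a..b})"
    using d has_field_derivative_iff by blast
  have nb: "at b within {a..b} \<noteq> bot"
    using ab by (simp add: at_within_Icc_at_left)
  have "\<forall>\<^sub>F y in at b within {a..b}. 0 \<le> (g y - g b) / (y - b)"
    unfolding eventually_at
  proof (intro exI[of _ \<delta>] conjI ballI impI)
    fix y assume y: "y \<in> {a..b}" "y \<noteq> b \<and> dist y b < \<delta>"
    then have "y - b < 0" "b - y < \<delta>" by (auto simp: dist_real_def)
    with m y show "0 \<le> (g y - g b) / (y - b)" by (simp add: divide_nonpos_neg)
  qed (use assms in auto)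
  then show ?thesis using tendsto_lowerbound[OF t _ nb] by blast
qed

lemma deriv_left_min:
  fixes g :: "real \<Rightarrow> real"
  assumes d: "(g has_real_derivative l) (at a within {a..b})" and ab: "a < b" and "\<delta> > 0"
    and m: "\<forall>s\<in>{a..b}. s - a < \<delta> \<longrightarrow> g s \<ge> g a"
  shows "l \<ge> 0"
  using deriv_left_max[of "\<lambda>x. - g x" "-l" a b \<delta>] assms DERIV_minus[OF d] by auto

lemma deriv_right_min:
  fixes g :: "real \<Rightarrow> real"
  assumes d: "(g has_real_derivative l) (at b within {a..b})" and ab: "a < b" and "\<delta> > 0"
    and m: "\<forall>s\<in>{a..b}. b - s < \<delta> \<longrightarrow> g s \<ge> g b"
  shows "l \<le> 0"
  using deriv_right_max[of "\<lambda>x. - g x" "-l" b a \<delta>] assms DERIV_minus[OF d] by auto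

lemma interior_ext:
  fixes g :: "real \<Rightarrow> real"
  assumes d: "(g has_real_derivative l) (at t within {0..L})" and "0 < t" "t < L" "\<delta> > 0"
    and m: "(\<forall>s\<in>{0..L}. \<bar>s - t\<bar> < \<delta> \<longrightarrow> g s \<le> g t) \<or> (\<forall>s\<in>{0..L}. \<bar>s - t\<bar> < \<delta> \<longrightarrow> g s \<ge> g t)"
  shows "l = 0"
proof -
  have d1: "(g has_real_derivative l) (at t within {t..L})"
    by (rule DERIV_subset[OF d]) (use assms in auto)
  have d2: "(g has_real_derivative l) (at t within {0..t})"
    by (rule DERIV_subset[OF d]) (use assms in auto)
  from m show ?thesis
  proof
    assume h: "\<forall>s\<in>{0..L}. \<bar>s - t\<bar> < \<delta> \<longrightarrow> g s \<le> g t"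
    have "l \<le> 0" by (rule deriv_left_max[OF d1 \<open>t<L\<close> \<open>\<delta>>0\<close>]) (use h assms in auto)
    moreover have "l \<ge> 0" by (rule deriv_right_max[OF d2 \<open>0<t\<close> \<open>\<delta>>0\<close>]) (use h assms in auto)
    ultimately show ?thesis by simp
  next
    assume h: "\<forall>s\<in>{0..L}. \<bar>s - t\<bar> < \<delta> \<longrightarrow> g s \<ge> g t"
    have "l \<ge> 0" by (rule deriv_left_min[OF d1 \<open>t<L\<close> \<open>\<delta>>0\<close>]) (use h assms in auto)
    moreover have "l \<le> 0" by (rule deriv_right_min[OF d2 \<open>0<t\<close> \<open>\<delta>>0\<close>]) (use h assms in auto)
    ultimately show ?thesis by simp
  qed
qed

lemma zeros_finite:
  fixes g d :: "real \<Rightarrow> real"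
  assumes L: "L > 0"
    and der: "\<And>t. t\<in>{0..L} \<Longrightarrow> (g has_real_derivative d t) (at t within {0..L}) \<and>
              (d has_real_derivative -(k\<^sup>2 * g t)) (at t within {0..L})"
  shows "finite {t\<in>{0..L}. d t = 0} \<or> (\<forall>t\<in>{0..L}. d t = 0 \<and> k\<^sup>2 * g t = 0)"
proof (cases "finite {t\<in>{0..L}. d t = 0}")
  case True then show ?thesis by simp
next
  let ?Z = "{t\<in>{0..L}. d t = 0}"
  case False
  then have "infinite ?Z" by simp
  then obtain t0 where t0: "t0 \<in> {0..L}" "t0 islimpt ?Z"
    using compact_eq_Bolzano_Weierstrass[of "{0..L::real}"] by auto
  have nb: "at t0 within ?Z \<noteq> bot" using t0 trivial_limit_within by blast
  have cont: "continuous_on {0..L} d"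
    by (rule DERIV_continuous_on) (use der in blast)
  have "(d \<longlongrightarrow> d t0) (at t0 within ?Z)"
    using cont t0(1) unfolding continuous_on_def
    by (metis (no_types, lifting) mem_Collect_eq subsetI tendsto_within_subset)
  moreover have "(d \<longlongrightarrow> 0) (at t0 within ?Z)"
    by (rule tendsto_eventually) (auto simp: eventually_at_filter)
  ultimately have d0: "d t0 = 0" using tendsto_unique[OF nb] by blast
  have "(d has_real_derivative -(k\<^sup>2 * g t0)) (at t0 within ?Z)"
    by (rule DERIV_subset[of _ _ _ "{0..L}"]) (use der t0 in auto)
  then have q: "((\<lambda>y. (d y - d t0) / (y - t0)) \<longlongrightarrow> -(k\<^sup>2 * g t0)) (at t0 within ?Z)"
    using has_field_derivative_iff by blast
  have "((\<lambda>y. (d y - d t0) / (y - t0)) \<longlongrightarrow> 0) (at t0 within ?Z)"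
    by (rule tendsto_eventually) (auto simp: eventually_at_filter d0)
  then have kg0: "k\<^sup>2 * g t0 = 0" using tendsto_unique[OF nb q] by fastforce
  define h where "h t = (d t)\<^sup>2 + k\<^sup>2 * (g t)\<^sup>2" for t
  have "\<exists>c. \<forall>t\<in>{0..L}. h t = c"
  proof (rule has_field_derivative_zero_constant)
    fix t assume t: "t \<in> {0..L}"
    have "(h has_real_derivative 2 * d t * (-(k\<^sup>2 * g t)) + k\<^sup>2 * (2 * g t * d t)) (at t within {0..L})"
      unfolding h_def using der[OF t]
      by (intro derivative_eq_intros) auto
    then show "(h has_real_derivative 0) (at t within {0..L})"
      by (simp add: algebra_simps)
  qed simp
  then obtain c where c: "\<forall>t\<in>{0..L}. h t = c" by blast
  have "h t0 = 0" unfolding h_def using d0 kg0 by (simp add: power2_eq_square)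
  then have h0: "\<forall>t\<in>{0..L}. h t = 0" using c t0 by auto
  have "\<forall>t\<in>{0..L}. d t = 0 \<and> k\<^sup>2 * g t = 0"
  proof
    fix t assume "t \<in> {0..L}"
    then have e: "(d t)\<^sup>2 + k\<^sup>2 * (g t)\<^sup>2 = 0" using h0 h_def by auto
    have "(d t)\<^sup>2 \<ge> 0" "k\<^sup>2 * (g t)\<^sup>2 \<ge> 0" by auto
    then have "(d t)\<^sup>2 = 0" "k\<^sup>2 * (g t)\<^sup>2 = 0" using e by linarith+
    then show "d t = 0 \<and> k\<^sup>2 * g t = 0" by (auto simp: power2_eq_square)
  qed
  then show ?thesis by simp
qed

lemma shift_deriv:
  fixes h :: "real \<Rightarrow> real"
  assumes "(h has_real_derivative l) (at (a+s) within {a..b})"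
  shows "((\<lambda>s. h (a+s)) has_real_derivative l) (at s within {0..b-a})"
proof -
  have im: "(+) a ` {0..b-a} = {a..b}" by (simp add: image_add_atLeastAtMost)
  have g: "((+) a has_real_derivative 1) (at s within {0..b-a})"
    by (intro derivative_eq_intros) auto
  have "(h \<circ> (+) a has_real_derivative l * 1) (at s within {0..b-a})"
    by (rule DERIV_image_chain) (use assms im g in auto)
  then show ?thesis by (simp add: o_def)
qed

lemma sums_zero:
  fixes a b :: "'x \<Rightarrow> real"
  assumes "finite A" "finite B" "\<forall>x\<in>A. a x \<le> 0" "\<forall>x\<in>B. b x \<ge> 0"
    "sum a A - sum b B = 0"
  shows "(\<forall>x\<in>A. a x = 0) \<and> (\<forall>x\<in>B. b x = 0)"
proof -
  have "sum a A \<le> 0" by (rule sum_nonpos) (use assms in auto)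
  moreover have "sum b B \<ge> 0" by (rule sum_nonneg) (use assms in auto)
  ultimately have s: "sum a A = 0" "sum b B = 0" using assms(5) by linarith+
  have "sum (\<lambda>x. - a x) A = 0" using s by (simp add: sum_negf)
  then have "\<forall>x\<in>A. - a x = 0" using sum_nonneg_eq_0_iff[of A "\<lambda>x. - a x"] assms by auto
  moreover have "\<forall>x\<in>B. b x = 0" using sum_nonneg_eq_0_iff[of B b] assms s by auto
  ultimately show ?thesis by auto
qed

lemma nrestr_eq: "nrestr f (e, a, b) = (\<lambda>s. f e (a + s))"
  by (auto simp: nrestr_def)

lemma nlen_eq: "nlen (e, a, b) = b - a"
  by (simp add: nlen_def)

theorem lemma8p1:
  fixes V :: "'v set" and E :: "'e set" and src tgt :: "'e \<Rightarrow> 'v" and L :: "'e \<Rightarrow> real"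
    and k :: real and f :: "'e \<Rightarrow> real \<Rightarrow> real"
    and OV :: "('v, 'e) nvert set" and OE :: "('e \<times> real \<times> real) set"
  assumes "standard_graph V E src tgt L"
    and "nontrivial_graph V E src tgt"
    and "eigenfunction V E src tgt L k f"
    and "morse E L f"
    and "neumann_domain V E src tgt L f OV OE"
  shows "eigenfunction OV OE (nsrc E src tgt L f) (ntgt E src tgt L f) nlen k (nrestr f)"
proof -
  have finE: "finite E" and EV: "\<And>e. e \<in> E \<Longrightarrow> src e \<in> V \<and> tgt e \<in> V \<and> L e > 0"
    using assms(1) unfolding standard_graph_def metric_graph_def by auto
  have k0: "k \<ge> 0" using assms(3) unfolding eigenfunction_def by auto
  obtain D where der: "\<And>e t. e\<in>E \<Longrightarrow> t\<in>{0..L e} \<Longrightarrow>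
           (f e has_real_derivative D e t) (at t within {0..L e}) \<and>
           (D e has_real_derivative (- (k\<^sup>2 * f e t))) (at t within {0..L e})"
    and kir: "\<And>v. v\<in>V \<Longrightarrow> (\<Sum>e\<in>{e\<in>E. src e = v}. D e 0) - (\<Sum>e\<in>{e\<in>E. tgt e = v}. D e (L e)) = 0"
    using assms(3) unfolding eigenfunction_def by blast
  obtain G where G: "\<And>e. e\<in>E \<Longrightarrow> f e 0 = G (src e) \<and> f e (L e) = G (tgt e)"
    using assms(3) unfolding eigenfunction_def by blast
  have morse: "\<And>e t. e\<in>E \<Longrightarrow> 0 < t \<Longrightarrow> t < L e \<Longrightarrow> \<not> (deriv (f e) t = 0 \<and> deriv (deriv (f e)) t = 0)"
    using assms(4) unfolding morse_def by auto
  let ?PE = "pieces E L f"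
  let ?s = "nsrc E src tgt L f"
  let ?t = "ntgt E src tgt L f"
  let ?adj = "graph_adj ?PE ?s ?t"
  obtain p0 where p0: "p0 \<in> ?PE" and OV: "OV = {w. (?s p0, w) \<in> ?adj\<^sup>*}"
    and OE: "OE = {p\<in>?PE. ?s p \<in> OV}"
    using assms(5) unfolding neumann_domain_def Let_def by blast

  have DD: "deriv (f e) t = D e t \<and> deriv (deriv (f e)) t = -(k\<^sup>2 * f e t)"
    if e: "e \<in> E" and t: "0 < t" "t < L e" for e t
  proof -
    have o: "open {0<..<L e}" "t \<in> {0<..<L e}" using t by auto
    have sub: "{0<..<L e} \<subseteq> {0..L e}" by auto
    have AT: "\<And>x. x \<in> {0<..<L e} \<Longrightarrow> (f e has_real_derivative D e x) (at x) \<and>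
                (D e has_real_derivative -(k\<^sup>2 * f e x)) (at x)"
    proof -
      fix x assume x: "x \<in> {0<..<L e}"
      have w: "(f e has_real_derivative D e x) (at x within {0..L e})"
        "(D e has_real_derivative -(k\<^sup>2 * f e x)) (at x within {0..L e})"
        using der[OF e] x by auto
      have "(f e has_real_derivative D e x) (at x within {0<..<L e})"
        by (rule DERIV_subset[OF w(1) sub])
      moreover have "(D e has_real_derivative -(k\<^sup>2 * f e x)) (at x within {0<..<L e})"
        by (rule DERIV_subset[OF w(2) sub])
      ultimately show "(f e has_real_derivative D e x) (at x) \<and>
                (D e has_real_derivative -(k\<^sup>2 * f e x)) (at x)"
        using at_within_open[OF x o(1)] by simp
    qed
    have d1: "(f e has_real_derivative D e t) (at t)" using AT o(2) by blast
    have d2: "(D e has_real_derivative -(k\<^sup>2 * f e t)) (at t)" using AT o(2) by blast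
    have eq: "\<And>x. x \<in> {0<..<L e} \<Longrightarrow> D e x = deriv (f e) x"
      using AT DERIV_imp_deriv by metis
    have "(deriv (f e) has_real_derivative -(k\<^sup>2 * f e t)) (at t)"
      by (rule has_field_derivative_transform_within_open[OF d2 o(1) o(2) eq])
    then show ?thesis using DERIV_imp_deriv d1 by blast
  qed

  have Zfin: "finite {t\<in>{0..L e}. D e t = 0}" if e: "e \<in> E" for e
  proof -
    have "finite {t\<in>{0..L e}. D e t = 0} \<or> (\<forall>t\<in>{0..L e}. D e t = 0 \<and> k\<^sup>2 * f e t = 0)"
      by (rule zeros_finite[where g = "f e"]) (use EV[OF e] der[OF e] in auto)
    moreover have "\<not> (\<forall>t\<in>{0..L e}. D e t = 0 \<and> k\<^sup>2 * f e t = 0)"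
    proof
      assume h: "\<forall>t\<in>{0..L e}. D e t = 0 \<and> k\<^sup>2 * f e t = 0"
      have L0: "L e > 0" using EV[OF e] by auto
      then have "0 < L e / 2" "L e / 2 < L e" by auto
      with DD[OF e this] morse[OF e this] h L0 show False by auto
    qed
    ultimately show ?thesis by blast
  qed

  have EXT: "D e t = 0" if e: "e \<in> E" and x: "edge_extremum L f e t" for e t
  proof -
    obtain \<delta> where "\<delta> > 0" "0 < t" "t < L e"
      and m: "(\<forall>s\<in>{0..L e}. \<bar>s - t\<bar> < \<delta> \<longrightarrow> f e s \<le> f e t) \<or> (\<forall>s\<in>{0..L e}. \<bar>s - t\<bar> < \<delta> \<longrightarrow> f e s \<ge> f e t)"
      using x unfolding edge_extremum_def by blast
    then show ?thesis using interior_ext[OF conjunct1[OF der[OF e]] _ _ _ m] by auto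
  qed

  have CF: "finite (cutpts L f e)" if e: "e \<in> E" for e
  proof (rule finite_subset)
    show "cutpts L f e \<subseteq> {0, L e} \<union> {t\<in>{0..L e}. D e t = 0}"
      unfolding cutpts_def using EXT[OF e] by (auto simp: edge_extremum_def)
  qed (use Zfin[OF e] in auto)

  have CP: "0 \<le> t \<and> t \<le> L e" if e: "e \<in> E" and "t \<in> cutpts L f e" for e t
    using that EV[OF e] unfolding cutpts_def edge_extremum_def by auto

  have PC: "e \<in> E \<and> 0 \<le> a \<and> a < b \<and> b \<le> L e \<and> a \<in> cutpts L f e \<and> b \<in> cutpts L f e"
    if "(e, a, b) \<in> ?PE" for e a b
    using that CP unfolding pieces_def by blast

  have VX: "(src e = v \<longrightarrow> D e 0 = 0) \<and> (tgt e = v \<longrightarrow> D e (L e) = 0)"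
    if v: "v \<in> V" and vx: "vertex_extremum E src tgt L f v" and e: "e \<in> E" for v e
  proof -
    have fA: "finite {e\<in>E. src e = v}" "finite {e\<in>E. tgt e = v}" using finE by auto
    obtain \<delta> where dp: "\<delta> > 0" and
      c: "(\<forall>e\<in>E. (src e = v \<longrightarrow> (\<forall>s\<in>{0..L e}. s < \<delta> \<longrightarrow> f e s \<le> f e 0)) \<and>
               (tgt e = v \<longrightarrow> (\<forall>s\<in>{0..L e}. L e - s < \<delta> \<longrightarrow> f e s \<le> f e (L e)))) \<or>
       (\<forall>e\<in>E. (src e = v \<longrightarrow> (\<forall>s\<in>{0..L e}. s < \<delta> \<longrightarrow> f e s \<ge> f e 0)) \<and>
               (tgt e = v \<longrightarrow> (\<forall>s\<in>{0..L e}. L e - s < \<delta> \<longrightarrow> f e s \<ge> f e (L e))))"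
      using vx unfolding vertex_extremum_def by blast
    have d0: "(f e has_real_derivative D e 0) (at 0 within {0..L e})"
      and dL: "(f e has_real_derivative D e (L e)) (at (L e) within {0..L e})" if "e \<in> E" for e
      using der[OF that] EV[OF that] by auto
    from c show ?thesis
    proof
      assume h: "\<forall>e\<in>E. (src e = v \<longrightarrow> (\<forall>s\<in>{0..L e}. s < \<delta> \<longrightarrow> f e s \<le> f e 0)) \<and>
               (tgt e = v \<longrightarrow> (\<forall>s\<in>{0..L e}. L e - s < \<delta> \<longrightarrow> f e s \<le> f e (L e)))"
      have A: "\<forall>e\<in>{e\<in>E. src e = v}. D e 0 \<le> 0"
      proof
        fix e assume e: "e \<in> {e\<in>E. src e = v}"
        then have e1: "e \<in> E" "src e = v" by auto
        have hh: "\<forall>s\<in>{0..L e}. s - 0 < \<delta> \<longrightarrow> f e s \<le> f e 0" using h e1 by simp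
        show "D e 0 \<le> 0" by (rule deriv_left_max[OF d0[OF e1(1)] conjunct2[OF conjunct2[OF EV[OF e1(1)]]] dp hh])
      qed
      have B: "\<forall>e\<in>{e\<in>E. tgt e = v}. D e (L e) \<ge> 0"
      proof
        fix e assume e: "e \<in> {e\<in>E. tgt e = v}"
        then have e1: "e \<in> E" "tgt e = v" by auto
        have hh: "\<forall>s\<in>{0..L e}. L e - s < \<delta> \<longrightarrow> f e s \<le> f e (L e)" using h e1 by simp
        show "D e (L e) \<ge> 0" by (rule deriv_right_max[OF dL[OF e1(1)] conjunct2[OF conjunct2[OF EV[OF e1(1)]]] dp hh])
      qed
      have "(\<forall>x\<in>{e\<in>E. src e = v}. D x 0 = 0) \<and> (\<forall>x\<in>{e\<in>E. tgt e = v}. D x (L x) = 0)"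
        by (rule sums_zero[OF fA A B kir[OF v]])
      then show ?thesis using e by blast
    next
      assume h: "\<forall>e\<in>E. (src e = v \<longrightarrow> (\<forall>s\<in>{0..L e}. s < \<delta> \<longrightarrow> f e s \<ge> f e 0)) \<and>
               (tgt e = v \<longrightarrow> (\<forall>s\<in>{0..L e}. L e - s < \<delta> \<longrightarrow> f e s \<ge> f e (L e)))"
      have A: "\<forall>e\<in>{e\<in>E. src e = v}. - D e 0 \<le> 0"
      proof
        fix e assume e: "e \<in> {e\<in>E. src e = v}"
        then have e1: "e \<in> E" "src e = v" by auto
        have hh: "\<forall>s\<in>{0..L e}. s - 0 < \<delta> \<longrightarrow> f e s \<ge> f e 0" using h e1 by simp
        have "D e 0 \<ge> 0" by (rule deriv_left_min[OF d0[OF e1(1)] conjunct2[OF conjunct2[OF EV[OF e1(1)]]] dp hh])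
        then show "- D e 0 \<le> 0" by simp
      qed
      have B: "\<forall>e\<in>{e\<in>E. tgt e = v}. - D e (L e) \<ge> 0"
      proof
        fix e assume e: "e \<in> {e\<in>E. tgt e = v}"
        then have e1: "e \<in> E" "tgt e = v" by auto
        have hh: "\<forall>s\<in>{0..L e}. L e - s < \<delta> \<longrightarrow> f e s \<ge> f e (L e)" using h e1 by simp
        have "D e (L e) \<le> 0" by (rule deriv_right_min[OF dL[OF e1(1)] conjunct2[OF conjunct2[OF EV[OF e1(1)]]] dp hh])
        then show "- D e (L e) \<ge> 0" by simp
      qed
      have K: "(\<Sum>e\<in>{e\<in>E. src e = v}. - D e 0) - (\<Sum>e\<in>{e\<in>E. tgt e = v}. - D e (L e)) = 0"
        using kir[OF v] by (simp add: sum_negf)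
      have "(\<forall>x\<in>{e\<in>E. src e = v}. - D x 0 = 0) \<and> (\<forall>x\<in>{e\<in>E. tgt e = v}. - D x (L x) = 0)"
        by (rule sums_zero[OF fA A B K])
      then show ?thesis using e by auto
    qed
  qed

  have CUT0: "D e a = 0" if p: "(e, a, b) \<in> ?PE" and c: "?s (e, a, b) = Cut x y z" for e a b x y z
  proof (cases "a = 0")
    case True
    then have nv: "neumann_vertex E src tgt L f (src e)" using c by (auto simp: nsrc_def split: if_splits)
    have e: "e \<in> E" using PC[OF p] by auto
    show ?thesis using VX[OF conjunct1[OF EV[OF e]] _ e] nv True unfolding neumann_vertex_def by auto
  next
    case False
    then have "edge_extremum L f e a" using PC[OF p] unfolding cutpts_def by auto
    then show ?thesis using EXT PC[OF p] by auto
  qed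

  have CUT1: "D e b = 0" if p: "(e, a, b) \<in> ?PE" and c: "?t (e, a, b) = Cut x y z" for e a b x y z
  proof (cases "b = L e")
    case True
    then have nv: "neumann_vertex E src tgt L f (tgt e)" using c by (auto simp: ntgt_def split: if_splits)
    have e: "e \<in> E" using PC[OF p] by auto
    show ?thesis using VX[OF conjunct1[OF conjunct2[OF EV[OF e]]] _ e] nv True unfolding neumann_vertex_def by auto
  next
    case False
    then have "edge_extremum L f e b" using PC[OF p] unfolding cutpts_def by auto
    then show ?thesis using EXT PC[OF p] by auto
  qed

  define nxt where "nxt e = Min {t\<in>cutpts L f e. 0 < t}" for e
  define prv where "prv e = Max {t\<in>cutpts L f e. t < L e}" for e
  have NX: "(e, 0, nxt e) \<in> ?PE \<and> (\<forall>b. (e, 0, b) \<in> ?PE \<longrightarrow> b = nxt e)" if e: "e \<in> E" for e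
  proof -
    let ?A = "{t\<in>cutpts L f e. 0 < t}"
    have fin: "finite ?A" using CF[OF e] by auto
    have ne: "L e \<in> ?A" using EV[OF e] by (auto simp: cutpts_def)
    have m1: "nxt e \<in> ?A" unfolding nxt_def using Min_in[OF fin] ne by blast
    have m2: "\<And>t. t \<in> ?A \<Longrightarrow> nxt e \<le> t" unfolding nxt_def using Min_le[OF fin] by blast
    have z: "0 \<in> cutpts L f e" by (simp add: cutpts_def)
    have P: "(e, 0, nxt e) \<in> ?PE" unfolding pieces_def using e m1 m2 z by force
    moreover have "\<forall>b. (e, 0, b) \<in> ?PE \<longrightarrow> b = nxt e"
    proof (intro allI impI)
      fix b assume b: "(e, 0, b) \<in> ?PE"
      then have "b \<in> ?A" unfolding pieces_def by auto
      then have "nxt e \<le> b" by (rule m2)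
      moreover have "\<not> nxt e < b" using b m1 unfolding pieces_def by auto
      ultimately show "b = nxt e" by auto
    qed
    ultimately show ?thesis by blast
  qed
  have PV: "(e, prv e, L e) \<in> ?PE \<and> (\<forall>a. (e, a, L e) \<in> ?PE \<longrightarrow> a = prv e)" if e: "e \<in> E" for e
  proof -
    let ?A = "{t\<in>cutpts L f e. t < L e}"
    have fin: "finite ?A" using CF[OF e] by auto
    have ne: "0 \<in> ?A" using EV[OF e] by (auto simp: cutpts_def)
    have m1: "prv e \<in> ?A" unfolding prv_def using Max_in[OF fin] ne by blast
    have m2: "\<And>t. t \<in> ?A \<Longrightarrow> t \<le> prv e" unfolding prv_def using Max_ge[OF fin] by blast
    have z: "L e \<in> cutpts L f e" by (simp add: cutpts_def)
    have P: "(e, prv e, L e) \<in> ?PE" unfolding pieces_def using e m1 m2 z by force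
    moreover have "\<forall>a. (e, a, L e) \<in> ?PE \<longrightarrow> a = prv e"
    proof (intro allI impI)
      fix a assume a: "(e, a, L e) \<in> ?PE"
      then have "a \<in> ?A" unfolding pieces_def by auto
      then have "a \<le> prv e" by (rule m2)
      moreover have "\<not> a < prv e" using a m1 unfolding pieces_def by auto
      ultimately show "a = prv e" by auto
    qed
    ultimately show ?thesis by blast
  qed

  define DP where "DP p s = D (fst p) (fst (snd p) + s)" for p :: "'e \<times> real \<times> real" and s
  have DPe: "\<And>e a b. DP (e, a, b) = (\<lambda>s. D e (a + s))" by (auto simp: DP_def)
  have OEsub: "OE \<subseteq> ?PE" using OE by auto
  have finOE: "finite OE"
  proof (rule finite_subset[OF OEsub])
    have "?PE \<subseteq> (SIGMA e:E. cutpts L f e \<times> cutpts L f e)"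
      unfolding pieces_def by auto
    then show "finite ?PE" by (rule finite_subset) (use finE CF in auto)
  qed

  show ?thesis
    unfolding eigenfunction_def
  proof (intro conjI)
    show "k \<ge> 0" by (rule k0)
    show "\<exists>D. (\<forall>e\<in>OE. \<forall>t\<in>{0..nlen e}.
             (nrestr f e has_real_derivative D e t) (at t within {0..nlen e}) \<and>
             (D e has_real_derivative - (k\<^sup>2 * nrestr f e t)) (at t within {0..nlen e})) \<and>
          (\<forall>v\<in>OV. (\<Sum>e\<in>{e \<in> OE. ?s e = v}. D e 0) - (\<Sum>e\<in>{e \<in> OE. ?t e = v}. D e (nlen e)) = 0)"
    proof (rule exI[of _ DP], rule conjI)
      show "\<forall>p\<in>OE. \<forall>t\<in>{0..nlen p}. (nrestr f p has_real_derivative DP p t) (at t within {0..nlen p}) \<and>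
            (DP p has_real_derivative - (k\<^sup>2 * nrestr f p t)) (at t within {0..nlen p})"
      proof (intro ballI)
      fix p t assume p: "p \<in> OE" and t: "t \<in> {0..nlen p}"
      obtain e a b where pe: "p = (e, a, b)" by (cases p) auto
      have pc: "e \<in> E \<and> 0 \<le> a \<and> a < b \<and> b \<le> L e" using PC p OEsub pe by blast
      have tt: "a + t \<in> {0..L e}" using t pc by (auto simp: pe nlen_eq)
      have sub: "{a..b} \<subseteq> {0..L e}" using pc by auto
      have d1: "(f e has_real_derivative D e (a + t)) (at (a + t) within {a..b})"
        using DERIV_subset[OF conjunct1[OF der[OF _ tt]] sub] pc by auto
      have d2: "(D e has_real_derivative -(k\<^sup>2 * f e (a + t))) (at (a + t) within {a..b})"
        using DERIV_subset[OF conjunct2[OF der[OF _ tt]] sub] pc by auto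
      show "(nrestr f p has_real_derivative DP p t) (at t within {0..nlen p}) \<and>
            (DP p has_real_derivative - (k\<^sup>2 * nrestr f p t)) (at t within {0..nlen p})"
        using shift_deriv[OF d1] shift_deriv[OF d2]
        by (simp add: pe nrestr_eq nlen_eq DPe)
      qed
    next
      show "\<forall>v\<in>OV. (\<Sum>p\<in>{p \<in> OE. ?s p = v}. DP p 0) - (\<Sum>p\<in>{p \<in> OE. ?t p = v}. DP p (nlen p)) = 0"
      proof
      fix v assume v: "v \<in> OV"
      show "(\<Sum>p\<in>{p \<in> OE. ?s p = v}. DP p 0) - (\<Sum>p\<in>{p \<in> OE. ?t p = v}. DP p (nlen p)) = 0"
      proof (cases v)
        case (Cut x y z)
        have "(\<Sum>p\<in>{p \<in> OE. ?s p = v}. DP p 0) = 0"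
        proof (rule sum.neutral, rule ballI)
          fix p assume p: "p \<in> {p \<in> OE. ?s p = v}"
          obtain e a b where pe: "p = (e, a, b)" by (cases p) auto
          show "DP p 0 = 0" using CUT0[of e a b x y z] p pe OEsub Cut by (auto simp: DP_def)
        qed
        moreover have "(\<Sum>p\<in>{p \<in> OE. ?t p = v}. DP p (nlen p)) = 0"
        proof (rule sum.neutral, rule ballI)
          fix p assume p: "p \<in> {p \<in> OE. ?t p = v}"
          obtain e a b where pe: "p = (e, a, b)" by (cases p) auto
          show "DP p (nlen p) = 0" using CUT1[of e a b x y z] p pe OEsub Cut by (auto simp: DP_def nlen_eq)
        qed
        ultimately show ?thesis by simp
      next
        case (Old w)
        show ?thesis
        proof (cases "neumann_vertex E src tgt L f w")
          case True
          have E1: "{p \<in> OE. ?s p = v} = {}" and E2: "{p \<in> OE. ?t p = v} = {}"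
            using True Old by (auto simp: nsrc_def ntgt_def split: if_splits)
          show ?thesis unfolding E1 E2 by simp
        next
          case False
          have S: "{p \<in> OE. ?s p = v} = (\<lambda>e. (e, 0::real, nxt e)) ` {e\<in>E. src e = w}"
          proof (intro equalityI subsetI)
            fix p assume p: "p \<in> {p \<in> OE. ?s p = v}"
            obtain e a b where pe: "p = (e, a, b)" by (cases p) auto
            have pp: "(e, a, b) \<in> ?PE" using p pe OEsub by auto
            have "a = 0" "src e = w" using p pe Old by (auto simp: nsrc_def split: if_splits)
            then show "p \<in> (\<lambda>e. (e, 0::real, nxt e)) ` {e\<in>E. src e = w}"
              using NX pp PC[OF pp] pe by auto
          next
            fix p assume "p \<in> (\<lambda>e. (e, 0::real, nxt e)) ` {e\<in>E. src e = w}"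
            then obtain e where e: "e \<in> E" "src e = w" and pe: "p = (e, 0::real, nxt e)" by auto
            have sp: "?s p = v" using pe e False Old by (simp add: nsrc_def)
            then show "p \<in> {p \<in> OE. ?s p = v}" using OE NX[OF e(1)] pe v by auto
          qed
          have T: "{p \<in> OE. ?t p = v} = (\<lambda>e. (e, prv e, L e)) ` {e\<in>E. tgt e = w}"
          proof (intro equalityI subsetI)
            fix p assume p: "p \<in> {p \<in> OE. ?t p = v}"
            obtain e a b where pe: "p = (e, a, b)" by (cases p) auto
            have pp: "(e, a, b) \<in> ?PE" using p pe OEsub by auto
            have "b = L e" "tgt e = w" using p pe Old by (auto simp: ntgt_def split: if_splits)
            then show "p \<in> (\<lambda>e. (e, prv e, L e)) ` {e\<in>E. tgt e = w}"
              using PV pp PC[OF pp] pe by auto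
          next
            fix p assume "p \<in> (\<lambda>e. (e, prv e, L e)) ` {e\<in>E. tgt e = w}"
            then obtain e where e: "e \<in> E" "tgt e = w" and pe: "p = (e, prv e, L e)" by auto
            have pp: "p \<in> ?PE" using PV[OF e(1)] pe by auto
            have tp: "?t p = v" using pe e False Old by (simp add: ntgt_def)
            have "(?t p, ?s p) \<in> ?adj" using pp unfolding graph_adj_def by blast
            moreover have "(?s p0, ?t p) \<in> ?adj\<^sup>*" using v tp OV by auto
            ultimately have "?s p \<in> OV" using OV by (auto intro: rtrancl_into_rtrancl)
            then show "p \<in> {p \<in> OE. ?t p = v}" using OE pp tp by auto
          qed
          have i1: "inj_on (\<lambda>e. (e, 0::real, nxt e)) {e\<in>E. src e = w}" by (auto intro: inj_onI)
          have i2: "inj_on (\<lambda>e. (e, prv e, L e)) {e\<in>E. tgt e = w}" by (auto intro: inj_onI)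
          have s1: "(\<Sum>p\<in>{p \<in> OE. ?s p = v}. DP p 0) = (\<Sum>e\<in>{e\<in>E. src e = w}. D e 0)"
            unfolding S by (subst sum.reindex[OF i1]) (simp add: DP_def)
          have s2: "(\<Sum>p\<in>{p \<in> OE. ?t p = v}. DP p (nlen p)) = (\<Sum>e\<in>{e\<in>E. tgt e = w}. D e (L e))"
            unfolding T by (subst sum.reindex[OF i2]) (simp add: DP_def nlen_eq)
          show ?thesis
          proof (cases "w \<in> V")
            case True
            then show ?thesis using s1 s2 kir by simp
          next
            case False
            then have E1: "{e\<in>E. src e = w} = {}" and E2: "{e\<in>E. tgt e = w} = {}" using EV by auto
            show ?thesis unfolding s1 s2 E1 E2 by simp
          qed
        qed
      qed
      qed
    qed
    show "\<exists>g. \<forall>p\<in>OE. nrestr f p 0 = g (?s p) \<and> nrestr f p (nlen p) = g (?t p)"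
    proof (intro exI[of _ "\<lambda>v. case v of Old w \<Rightarrow> G w | Cut e t _ \<Rightarrow> f e t"] ballI)
      fix p assume p: "p \<in> OE"
      obtain e a b where pe: "p = (e, a, b)" by (cases p) auto
      have pc: "e \<in> E" using PC p OEsub pe by blast
      show "nrestr f p 0 = (case ?s p of Old w \<Rightarrow> G w | Cut e t _ \<Rightarrow> f e t) \<and>
            nrestr f p (nlen p) = (case ?t p of Old w \<Rightarrow> G w | Cut e t _ \<Rightarrow> f e t)"
        using G[OF pc] by (auto simp: pe nrestr_eq nlen_eq nsrc_def ntgt_def)
    qed
    show "\<exists>p\<in>OE. \<exists>t\<in>{0..nlen p}. nrestr f p t \<noteq> 0"
    proof (rule ccontr)
      assume "\<not> ?thesis"
      moreover have "p0 \<in> OE" using p0 OE OV by simp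
      ultimately have z: "\<forall>t\<in>{0..nlen p0}. nrestr f p0 t = 0" by blast
      obtain e a b where pe: "p0 = (e, a, b)" by (cases p0) auto
      have pc: "e \<in> E \<and> 0 \<le> a \<and> a < b \<and> b \<le> L e" using PC p0 pe by blast
      have z2: "\<forall>s\<in>{a..b}. f e s = 0"
      proof
        fix s assume s: "s \<in> {a..b}"
        then have "s - a \<in> {0..nlen p0}" by (auto simp: pe nlen_eq)
        then have "nrestr f p0 (s - a) = 0" using z by blast
        then show "f e s = 0" by (simp add: pe nrestr_eq)
      qed
      define m where "m = (a + b) / 2"
      have m: "a < m" "m < b" using pc by (auto simp: m_def)
      have m0: "0 < m" "m < L e" using m pc by auto
      have "((\<lambda>_. 0) has_real_derivative 0) (at m)" by simp
      then have "(f e has_real_derivative 0) (at m)"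
        by (rule has_field_derivative_transform_within_open[where S = "{a<..<b}"]) (use m z2 in auto)
      then have "deriv (f e) m = 0" by (rule DERIV_imp_deriv)
      moreover have "deriv (deriv (f e)) m = 0" using DD[OF _ m0] pc z2 m by auto
      ultimately show False using morse[OF _ m0] pc by auto
    qed
  qed
qed
end
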